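(* Let $S_X,S_Y$ be finite nonempty action sets and $\varphi:S_X\times S_Y\to\mathbb{R}$, and suppose $\Phi_X^+\neq\emptyset$ and $\Phi_X^-\neq\emptyset$. Then there exist a set $\mathcal{M}_X\subseteq\Delta(S_X)$, a two-point response function $\sigma_X^*:\mathcal{M}_X\times S_Y\to\mathcal{M}_X$, and a function $\Psi:\mathcal{M}_X\to\mathbb{R}$ such that $$\varphi(\tau_X,s_Y)=\Psi(\tau_X)-\Psi(\sigma_X^*[\tau_X,s_Y])$$ for all $\tau_X\in\mathcal{M}_X$ and $s_Y\in S_Y$.
   Context: $\Delta(S)$ denotes the probability distributions on $S$; $\varphi(\tau_X,s_Y)=\mathbb{E}_{s_X\sim\tau_X}[\varphi(s_X,s_Y)]$. $\Phi_X^+=\{\tau_X\in\Delta(S_X):\min_{s_Y\in S_Y}\varphi(\tau_X,s_Y)\ge0\}$ and $\Phi_X^-=\{\tau_X\in\Delta(S_X):\max_{s_Y\in S_Y}\varphi(\tau_X,s_Y)\le0\}$. A response function $\sigma_X^*:\mathcal{M}_X\times S_Y\to\mathcal{M}_X$ is two-point if there exist $\tau_X^+,\tau_X^-\in\Delta(S_X)$ and $p^*:[0,1]\times S_Y\to[0,1]$ such that $\mathcal{M}_X\subseteq\{p\tau_X^++(1-p)\tau_X^-:p\in[0,1]\}$ and $\sigma_X^*[p\tau_X^++(1-p)\tau_X^-,s_Y]=p^*[p,s_Y]\tau_X^++(1-p^*[p,s_Y])\tau_X^-$. *)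

theory Defs
  imports Main Complex_Main
begin

text \<open>Action sets S_X, S_Y are modelled as finite (hence nonempty) types.
  A mixed strategy is a function to the reals; Delta(S) is the probability simplex.\<close>

definition simplex :: "('a::finite \<Rightarrow> real) set" where
  "simplex = {\<tau>. (\<forall>x. 0 \<le> \<tau> x) \<and> (\<Sum>x\<in>UNIV. \<tau> x) = 1}"

definition mixed_payoff :: "('x::finite \<Rightarrow> 'y \<Rightarrow> real) \<Rightarrow> ('x \<Rightarrow> real) \<Rightarrow> 'y \<Rightarrow> real" where
  "mixed_payoff \<phi> \<tau> y = (\<Sum>x\<in>UNIV. \<tau> x * \<phi> x y)"

definition Phi_plus :: "('x::finite \<Rightarrow> 'y::finite \<Rightarrow> real) \<Rightarrow> ('x \<Rightarrow> real) set" where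
  "Phi_plus \<phi> = {\<tau> \<in> simplex. Min (range (mixed_payoff \<phi> \<tau>)) \<ge> 0}"

definition Phi_minus :: "('x::finite \<Rightarrow> 'y::finite \<Rightarrow> real) \<Rightarrow> ('x \<Rightarrow> real) set" where
  "Phi_minus \<phi> = {\<tau> \<in> simplex. Max (range (mixed_payoff \<phi> \<tau>)) \<le> 0}"

definition mix :: "real \<Rightarrow> ('x \<Rightarrow> real) \<Rightarrow> ('x \<Rightarrow> real) \<Rightarrow> ('x \<Rightarrow> real)" where
  "mix p \<tau>p \<tau>m = (\<lambda>x. p * \<tau>p x + (1 - p) * \<tau>m x)"

text \<open>Two-point response function on M (sigma is only meaningful on M x S_Y).\<close>
definition two_point ::
  "('x::finite \<Rightarrow> real) set \<Rightarrow> (('x \<Rightarrow> real) \<Rightarrow> 'y \<Rightarrow> ('x \<Rightarrow> real)) \<Rightarrow> bool" where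
  "two_point M \<sigma> \<longleftrightarrow>
     (\<exists>\<tau>p \<in> simplex. \<exists>\<tau>m \<in> simplex. \<exists>pstar :: real \<Rightarrow> 'y \<Rightarrow> real.
        (\<forall>p\<in>{0..1}. \<forall>y. pstar p y \<in> {0..1}) \<and>
        M \<subseteq> {mix p \<tau>p \<tau>m | p. p \<in> {0..1}} \<and>
        (\<forall>p\<in>{0..1}. \<forall>y. mix p \<tau>p \<tau>m \<in> M \<longrightarrow>
            \<sigma> (mix p \<tau>p \<tau>m) y = mix (pstar p y) \<tau>p \<tau>m))"

end

theory Submission
  imports Defs
begin

lemma payoff_mix:
  "mixed_payoff \<phi> (mix p t s) y = p * mixed_payoff \<phi> t y + (1-p) * mixed_payoff \<phi> s y"
proof -
  have "(\<Sum>x\<in>UNIV. (p * t x + (1 - p) * s x) * \<phi> x y)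
      = (\<Sum>x\<in>UNIV. p * (t x * \<phi> x y) + (1-p) * (s x * \<phi> x y))"
    by (rule sum.cong) (auto simp: algebra_simps)
  also have "\<dots> = p * (\<Sum>x\<in>UNIV. t x * \<phi> x y) + (1-p) * (\<Sum>x\<in>UNIV. s x * \<phi> x y)"
    by (simp add: sum.distrib sum_distrib_left)
  finally show ?thesis by (simp only: mixed_payoff_def mix_def)
qed

lemma mix_simplex:
  assumes "t \<in> simplex" "s \<in> simplex" "p \<in> {0..1}"
  shows "mix p t s \<in> simplex"
  using assms unfolding simplex_def mix_def
  by (auto simp: sum.distrib sum_distrib_left[symmetric] intro!: add_nonneg_nonneg mult_nonneg_nonneg)

lemma plus_nonneg:
  fixes \<phi> :: "'x::finite \<Rightarrow> 'y::finite \<Rightarrow> real"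
  assumes "t \<in> Phi_plus \<phi>" shows "t \<in> simplex \<and> (\<forall>y. mixed_payoff \<phi> t y \<ge> 0)"
proof -
  have "Min (range (mixed_payoff \<phi> t)) \<le> mixed_payoff \<phi> t y" for y by (rule Min_le) auto
  then show ?thesis using assms unfolding Phi_plus_def by force
qed

lemma minus_nonpos:
  fixes \<phi> :: "'x::finite \<Rightarrow> 'y::finite \<Rightarrow> real"
  assumes "t \<in> Phi_minus \<phi>" shows "t \<in> simplex \<and> (\<forall>y. mixed_payoff \<phi> t y \<le> 0)"
proof -
  have "Max (range (mixed_payoff \<phi> t)) \<ge> mixed_payoff \<phi> t y" for y by (rule Max_ge) auto
  then show ?thesis using assms unfolding Phi_minus_def by force
qed

lemma mix_inj:
  assumes "t \<noteq> s" "mix p t s = mix q t s"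
  shows "p = q"
proof -
  obtain x where x: "t x \<noteq> s x" using assms(1) by auto
  have "p * t x + (1-p) * s x = q * t x + (1-q) * s x"
    using fun_cong[OF assms(2), of x] unfolding mix_def by simp
  then have "(p - q) * (t x - s x) = 0" by (simp add: algebra_simps)
  with x show ?thesis by simp
qed

theorem lemma5:
  fixes \<phi> :: "'x::finite \<Rightarrow> 'y::finite \<Rightarrow> real"
  assumes "Phi_plus \<phi> \<noteq> {}" and "Phi_minus \<phi> \<noteq> {}"
  shows "\<exists>M \<sigma> (\<Psi> :: ('x \<Rightarrow> real) \<Rightarrow> real).
           M \<subseteq> simplex \<and> M \<noteq> {} \<and>
           (\<forall>\<tau>\<in>M. \<forall>y. \<sigma> \<tau> y \<in> M) \<and>
           two_point M \<sigma> \<and>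
           (\<forall>\<tau>\<in>M. \<forall>y. mixed_payoff \<phi> \<tau> y = \<Psi> \<tau> - \<Psi> (\<sigma> \<tau> y))"
proof -
  obtain tp where tp: "tp \<in> Phi_plus \<phi>" using assms(1) by auto
  obtain tm where tm: "tm \<in> Phi_minus \<phi>" using assms(2) by auto
  define a where "a = mixed_payoff \<phi> tp"
  define b where "b = mixed_payoff \<phi> tm"
  have tpS: "tp \<in> simplex" and a0: "\<And>y. a y \<ge> 0" using plus_nonneg[OF tp] a_def by auto
  have tmS: "tm \<in> simplex" and b0: "\<And>y. b y \<le> 0" using minus_nonpos[OF tm] b_def by auto
  show ?thesis
  proof (cases "tp = tm")
    case True
    have z: "mixed_payoff \<phi> tp y = 0" for y using a0[of y] b0[of y] True a_def b_def
      by (simp add: order_antisym)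
    have m1: "mix 1 tp tm = tp" unfolding mix_def by simp
    have mm: "mix p tp tm = tp" for p using True unfolding mix_def by (auto simp: algebra_simps)
    have tw: "two_point {tp} (\<lambda>_ _. tp)"
      unfolding two_point_def
      apply (rule bexI[OF _ tpS], rule bexI[OF _ tmS], rule exI[of _ "\<lambda>_ _. 1"])
      using m1 mm by force
    show ?thesis
      apply (rule exI[of _ "{tp}"], rule exI[of _ "\<lambda>_ _. tp"], rule exI[of _ "\<lambda>_. 0"])
      using tpS tw z by auto
  next
    case False
    define C where "C = 1 + (\<Sum>y\<in>UNIV. \<bar>a y\<bar> + \<bar>b y\<bar>)"
    have Cge: "\<bar>a y\<bar> + \<bar>b y\<bar> \<le> C - 1" for y
      unfolding C_def using member_le_sum[of y UNIV "\<lambda>y. \<bar>a y\<bar> + \<bar>b y\<bar>"] by simp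
    have Cpos: "C > 0" using Cge[of undefined] by simp
    define f where "f p y = p - (p * a y + (1-p) * b y) / C" for p y
    have f01: "f p y \<in> {0..1}" if "p \<in> {0..1}" for p y
    proof -
      have ay: "a y \<le> C" "- b y \<le> C" using Cge[of y] a0[of y] b0[of y] by auto
      have p0: "p \<ge> 0" "1 - p \<ge> 0" using that by auto
      have u1: "p * a y \<le> p * C" using mult_left_mono[OF ay(1) p0(1)] .
      have u2: "(1-p) * b y \<le> 0" using mult_nonneg_nonpos[OF p0(2) b0[of y]] .
      have l1: "p * a y \<ge> 0" using mult_nonneg_nonneg[OF p0(1) a0[of y]] .
      have l2: "(1-p) * (- b y) \<le> (1-p) * C" using mult_left_mono[OF ay(2) p0(2)] .
      define X where "X = p * a y + (1-p) * b y"
      have X1: "0 \<le> p * C - X" using u1 u2 unfolding X_def by linarith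
      have X2: "p * C - X \<le> C" using l1 l2 unfolding X_def by (simp add: algebra_simps)
      have e: "f p y = (p * C - X) / C" unfolding f_def X_def using Cpos by (simp add: diff_divide_distrib)
      show ?thesis unfolding e using X1 X2 Cpos by (simp add: divide_le_eq_1)
    qed
    define M where "M = {mix p tp tm | p. p \<in> {0..1}}"
    define P where "P t = (SOME p. p \<in> {0..1} \<and> t = mix p tp tm)" for t
    have Pm: "P (mix p tp tm) = p" if "p \<in> {0..1}" for p
    proof -
      have "P (mix p tp tm) \<in> {0..1} \<and> mix p tp tm = mix (P (mix p tp tm)) tp tm"
        unfolding P_def by (rule someI[of _ p]) (use that in auto)
      then show ?thesis using mix_inj[OF False] by metis
    qed
    define \<sigma> where "\<sigma> t y = mix (f (P t) y) tp tm" for t y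
    define \<Psi> where "\<Psi> t = C * P t" for t
    have MS: "M \<subseteq> simplex" unfolding M_def using mix_simplex[OF tpS tmS] by auto
    have Mne: "M \<noteq> {}" unfolding M_def by auto
    have cl: "\<forall>\<tau>\<in>M. \<forall>y. \<sigma> \<tau> y \<in> M"
      unfolding M_def \<sigma>_def using Pm f01 by auto
    have tw: "two_point M \<sigma>"
      unfolding two_point_def
      apply (rule bexI[OF _ tpS], rule bexI[OF _ tmS], rule exI[of _ "\<lambda>p y. if p \<in> {0..1} then f p y else 0"])
      using f01 Pm unfolding M_def \<sigma>_def by auto
    have eq: "\<forall>\<tau>\<in>M. \<forall>y. mixed_payoff \<phi> \<tau> y = \<Psi> \<tau> - \<Psi> (\<sigma> \<tau> y)"
    proof (intro ballI allI)
      fix t y assume "t \<in> M"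
      then obtain p where p: "p \<in> {0..1}" "t = mix p tp tm" unfolding M_def by auto
      have "\<Psi> t - \<Psi> (\<sigma> t y) = C * p - C * f p y"
        unfolding \<Psi>_def \<sigma>_def using p Pm f01 by simp
      also have "\<dots> = p * a y + (1-p) * b y" unfolding f_def using Cpos
        by (simp add: field_simps)
      also have "\<dots> = mixed_payoff \<phi> t y" using p payoff_mix[of \<phi> p tp tm y] a_def b_def by simp
      finally show "mixed_payoff \<phi> t y = \<Psi> t - \<Psi> (\<sigma> t y)" by simp
    qed
    show ?thesis using MS Mne cl tw eq by blast
  qed
qed

end
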